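(* In the setting below, let $z_0$ be a singular point of $P$ with $k_1\neq0$, $\phi(z_0)=0$ and $\hat R_{\theta_1'\theta_1'}(z_0)\neq0$. Put $\ell_1=\hat R_{\theta_1'r_2'}(z_0)/\hat R_{\theta_1'\theta_1'}(z_0)$, $\ell_2=\hat R_{\theta_1'\theta_2'}(z_0)/\hat R_{\theta_1'\theta_1'}(z_0)$, and new coordinates $(r_1'',\theta_1'',r_2'',\theta_2'')=(r_1',\theta_1'+\ell_1r_2'+\ell_2\theta_2',r_2',\theta_2')$. Then the Hessian of $\hat R$ with respect to $(\theta_1'',r_2'',\theta_2'')$ at $z_0$ is the diagonal matrix $$\operatorname{diag}\Big(\hat R_{\theta_1'\theta_1'}(z_0),\ -\frac{4(p-1)^2|\mu|^2}{k_1^2\hat R_{\theta_1'\theta_1'}(z_0)},\ 0\Big),\quad\text{where }\hat R_{\theta_1'\theta_1'}(z_0)=\frac{4(p-1)|\mu|^3|u_0|\sin\Theta_1\cos\Theta_2}{k_1^2}.$$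
   Context: Fix integers $p,q\ge2$ and $\mu\in\mathbb{C}\setminus\{0\}$. Let $P(u,v;\mu)=\mu(u^p+\bar u)+v^q+\bar v$, regarded as a smooth map $\mathbb{R}^4\to\mathbb{R}^2$, with $Q=\operatorname{Re}P$, $R=\operatorname{Im}P$. A singular point is a point where the real differential of $P$ has rank $<2$; every singular point $z_0=(u_0,v_0)$ satisfies $u_0v_0\ne0$. Use polar coordinates $r_1=|u|,\theta_1=\arg u,r_2=|v|,\theta_2=\arg v$ near $z_0$. Fix real representatives $\arg u_0,\arg v_0,\arg\mu$ and an integer $\kappa$ with $\frac{p-1}{2}\arg u_0+\arg\mu=\frac{q-1}{2}\arg v_0+\kappa\pi$. Set $\Theta_1=\frac{p+1}{2}\arg u_0$, $\Theta_2=\frac{p-1}{2}\arg u_0+\arg\mu$, $\Theta_3=\frac{q+1}{2}\arg v_0$, $(k_1,k_2,k_3,k_4)=(\partial_{r_1}Q,\partial_{\theta_1}Q,\partial_{r_2}Q,\partial_{\theta_2}Q)(z_0)$, and $\phi(z_0)=(-1)^\kappa(p-1)|v_0|\sin\Theta_3+(q-1)|\mu||u_0|\sin\Theta_1$. When $k_1\ne0$, define coordinates $(r_1',\theta_1',r_2',\theta_2')=(k_1r_1+k_2\theta_1+k_3r_2+k_4\theta_2,\theta_1,r_2,\theta_2)$ near $z_0$, $s=\frac{\partial R}{\partial r_1'}(z_0)$ and $\hat R=R-sQ$; subscripts on $\hat R$ denote partial derivatives in the indicated coordinate system. *)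

theory Defs
  imports "HOL-Analysis.Analysis"
begin

definition Pmap :: "nat \<Rightarrow> nat \<Rightarrow> complex \<Rightarrow> complex \<times> complex \<Rightarrow> complex" where
  "Pmap p q \<mu> z = \<mu> * (fst z ^ p + cnj (fst z)) + snd z ^ q + cnj (snd z)"

definition singular_point :: "nat \<Rightarrow> nat \<Rightarrow> complex \<Rightarrow> complex \<times> complex \<Rightarrow> bool" where
  "singular_point p q \<mu> z \<longleftrightarrow> dim (range (frechet_derivative (Pmap p q \<mu>) (at z))) < 2"

definition pt4 :: "real \<Rightarrow> real \<Rightarrow> real \<Rightarrow> real \<Rightarrow> nat \<Rightarrow> real" where
  "pt4 a b c d = (\<lambda>i. if i = 0 then a else if i = 1 then b else if i = 2 then c else d)"

definition polar :: "(nat \<Rightarrow> real) \<Rightarrow> complex \<times> complex" where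
  "polar x = (complex_of_real (x 0) * cis (x 1), complex_of_real (x 2) * cis (x 3))"

definition Qpol :: "nat \<Rightarrow> nat \<Rightarrow> complex \<Rightarrow> (nat \<Rightarrow> real) \<Rightarrow> real" where
  "Qpol p q \<mu> x = Re (Pmap p q \<mu> (polar x))"

definition Rpol :: "nat \<Rightarrow> nat \<Rightarrow> complex \<Rightarrow> (nat \<Rightarrow> real) \<Rightarrow> real" where
  "Rpol p q \<mu> x = Im (Pmap p q \<mu> (polar x))"

definition pd :: "((nat \<Rightarrow> real) \<Rightarrow> real) \<Rightarrow> (nat \<Rightarrow> real) \<Rightarrow> nat \<Rightarrow> real" where
  "pd f x i = deriv (\<lambda>t. f (x(i := t))) (x i)"

definition pd2 :: "((nat \<Rightarrow> real) \<Rightarrow> real) \<Rightarrow> (nat \<Rightarrow> real) \<Rightarrow> nat \<Rightarrow> nat \<Rightarrow> real" where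
  "pd2 f x i j = pd (\<lambda>y. pd f y j) x i"

text \<open>First coordinate change (r1',th1',r2',th2') = (k1 r1 + k2 th1 + k3 r2 + k4 th2, th1, r2, th2),
  with k = (k 0, k 1, k 2, k 3) = (k1,k2,k3,k4), and its inverse (valid for k 0 \<noteq> 0).\<close>
definition chg1 :: "(nat \<Rightarrow> real) \<Rightarrow> (nat \<Rightarrow> real) \<Rightarrow> nat \<Rightarrow> real" where
  "chg1 k x = pt4 (k 0 * x 0 + k 1 * x 1 + k 2 * x 2 + k 3 * x 3) (x 1) (x 2) (x 3)"

definition chg1_inv :: "(nat \<Rightarrow> real) \<Rightarrow> (nat \<Rightarrow> real) \<Rightarrow> nat \<Rightarrow> real" where
  "chg1_inv k y = pt4 ((y 0 - k 1 * y 1 - k 2 * y 2 - k 3 * y 3) / k 0) (y 1) (y 2) (y 3)"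

definition chg2 :: "real \<Rightarrow> real \<Rightarrow> (nat \<Rightarrow> real) \<Rightarrow> nat \<Rightarrow> real" where
  "chg2 l1 l2 y = pt4 (y 0) (y 1 + l1 * y 2 + l2 * y 3) (y 2) (y 3)"

definition chg2_inv :: "real \<Rightarrow> real \<Rightarrow> (nat \<Rightarrow> real) \<Rightarrow> nat \<Rightarrow> real" where
  "chg2_inv l1 l2 w = pt4 (w 0) (w 1 - l1 * w 2 - l2 * w 3) (w 2) (w 3)"

end

theory Submission
  imports Defs
begin


type_synonym tm = "complex \<times> nat \<times> real \<times> nat"

definition evT :: "tm \<Rightarrow> (nat \<Rightarrow> real) \<Rightarrow> complex" where
  "evT \<tau> x = (case \<tau> of (c,j,n,b) \<Rightarrow> c * of_real (x b ^ j) * cis (n * x (Suc b)))"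

definition dT :: "nat \<Rightarrow> tm \<Rightarrow> tm" where
  "dT m \<tau> = (case \<tau> of (c,j,n,b) \<Rightarrow>
     if m = b then (c * of_nat j, j - 1, n, b)
     else if m = Suc b then (c * \<i> * of_real n, j, n, b) else (0, j, n, b))"

lemma Re_evT: "Re (evT (c,j,n,b) x) = x b ^ j * (Re c * cos (n * x (Suc b)) - Im c * sin (n * x (Suc b)))"
  by (simp add: evT_def cis.ctr algebra_simps)

lemma evT_deriv:
  "((\<lambda>t. Re (evT (c,j,n,b) (\<lambda>i. a i + t * d i))) has_real_derivative
     Re (of_real (d b) * evT (dT b (c,j,n,b)) (\<lambda>i. a i + t * d i)
       + of_real (d (Suc b)) * evT (dT (Suc b) (c,j,n,b)) (\<lambda>i. a i + t * d i))) (at t)"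
proof -
  have "((\<lambda>t. (a b + t * d b) ^ j * (Re c * cos (n * (a (Suc b) + t * d (Suc b)))
        - Im c * sin (n * (a (Suc b) + t * d (Suc b))))) has_real_derivative
     (of_nat j * (a b + t * d b) ^ (j - 1) * d b) * (Re c * cos (n * (a (Suc b) + t * d (Suc b)))
        - Im c * sin (n * (a (Suc b) + t * d (Suc b))))
     + (a b + t * d b) ^ j * (Re c * (- sin (n * (a (Suc b) + t * d (Suc b))) * (n * d (Suc b)))
        - Im c * (cos (n * (a (Suc b) + t * d (Suc b))) * (n * d (Suc b))))) (at t)"
    by (rule derivative_eq_intros refl | simp)+
  then show ?thesis
    by (simp add: Re_evT evT_def dT_def cis.ctr algebra_simps)
qed

definition FL :: "tm list \<Rightarrow> (nat \<Rightarrow> real) \<Rightarrow> complex" where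
  "FL xs x = (\<Sum>\<tau>\<leftarrow>xs. evT \<tau> x)"

definition scT :: "complex \<Rightarrow> tm \<Rightarrow> tm" where
  "scT k \<tau> = (case \<tau> of (c,j,n,b) \<Rightarrow> (k * c, j, n, b))"

definition dL :: "nat \<Rightarrow> tm list \<Rightarrow> tm list" where "dL m xs = map (dT m) xs"

definition dirL :: "(nat \<Rightarrow> real) \<Rightarrow> tm list \<Rightarrow> tm list" where
  "dirL D xs = concat (map (\<lambda>m. map (scT (of_real (D m))) (dL m xs)) [0..<4])"

definition wf :: "tm list \<Rightarrow> bool" where
  "wf xs \<longleftrightarrow> (\<forall>\<tau>\<in>set xs. snd (snd (snd \<tau>)) = 0 \<or> snd (snd (snd \<tau>)) = 2)"

lemma FL_Nil[simp]: "FL [] x = 0" by (simp add: FL_def)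
lemma FL_Cons[simp]: "FL (\<tau> # xs) x = evT \<tau> x + FL xs x" by (simp add: FL_def)
lemma FL_append[simp]: "FL (xs @ ys) x = FL xs x + FL ys x" by (simp add: FL_def)
lemma evT_scT[simp]: "evT (scT k \<tau>) x = k * evT \<tau> x"
  by (cases \<tau>) (auto simp: evT_def scT_def)
lemma FL_scT[simp]: "FL (map (scT k) xs) x = k * FL xs x"
  by (induct xs) (auto simp: algebra_simps)
lemma FL_concat: "FL (concat (map f ms)) x = (\<Sum>m\<leftarrow>ms. FL (f m) x)"
  by (induct ms) auto
lemma FL_dirL: "FL (dirL D xs) x = (\<Sum>m<4. of_real (D m) * FL (dL m xs) x)"
  by (simp add: dirL_def FL_concat numeral_eq_Suc lessThan_Suc atLeast0LessThan[symmetric] upt_conv_Cons)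

lemma dT_scT: "dT m (scT k \<tau>) = scT k (dT m \<tau>)"
  by (cases \<tau>) (auto simp: dT_def scT_def)
lemma dL_scT: "dL m (map (scT k) xs) = map (scT k) (dL m xs)"
  by (simp add: dL_def dT_scT)

lemma wf_dL: "wf xs \<Longrightarrow> wf (dL m xs)"
  by (auto simp: wf_def dL_def dT_def split: prod.splits)
lemma wf_dirL: "wf xs \<Longrightarrow> wf (dirL D xs)"
  by (auto simp: wf_def dirL_def dL_def dT_def scT_def split: prod.splits)

lemma evT_dT_other: "m \<noteq> b \<Longrightarrow> m \<noteq> Suc b \<Longrightarrow> evT (dT m (c,j,n,b)) x = 0"
  by (simp add: dT_def evT_def)

lemma sum4: "(\<Sum>m<(4::nat). f m) = f 0 + f 1 + f 2 + (f 3 :: 'a::comm_monoid_add)"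
  by (simp add: numeral_eq_Suc lessThan_Suc add.commute add.left_commute)

lemma evT_line_deriv:
  assumes "b = 0 \<or> b = 2"
  shows "((\<lambda>t. Re (evT (c,j,n,b) (\<lambda>i. a i + t * d i))) has_real_derivative
     Re (\<Sum>m<4. of_real (d m) * evT (dT m (c,j,n,b)) (\<lambda>i. a i + t * d i))) (at t)"
proof -
  have "(\<Sum>m<4. of_real (d m) * evT (dT m (c,j,n,b)) (\<lambda>i. a i + t * d i)) =
     of_real (d b) * evT (dT b (c,j,n,b)) (\<lambda>i. a i + t * d i)
       + of_real (d (Suc b)) * evT (dT (Suc b) (c,j,n,b)) (\<lambda>i. a i + t * d i)"
    using assms by (auto simp: sum4 evT_dT_other)
  then show ?thesis using evT_deriv by simp
qed

lemma FL_line_deriv: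
  assumes "wf xs"
  shows "((\<lambda>t. Re (FL xs (\<lambda>i. a i + t * d i))) has_real_derivative
     Re (FL (dirL d xs) (\<lambda>i. a i + t * d i))) (at t)"
  using assms
proof (induct xs)
  case Nil
  then show ?case by (simp add: FL_dirL dL_def)
next
  case (Cons \<tau> xs)
  obtain c j n b where tau: "\<tau> = (c,j,n,b)" by (cases \<tau>) auto
  have wfx: "wf xs" and b: "b = 0 \<or> b = 2" using Cons.prems by (auto simp: wf_def tau)
  have "((\<lambda>t. Re (evT \<tau> (\<lambda>i. a i + t * d i)) + Re (FL xs (\<lambda>i. a i + t * d i))) has_real_derivative
     Re (\<Sum>m<4. of_real (d m) * evT (dT m \<tau>) (\<lambda>i. a i + t * d i)) + Re (FL (dirL d xs) (\<lambda>i. a i + t * d i))) (at t)"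
    using evT_line_deriv[OF b] Cons.hyps[OF wfx] unfolding tau by (rule DERIV_add)
  moreover have "FL (dirL d (\<tau> # xs)) y = (\<Sum>m<4. of_real (d m) * evT (dT m \<tau>) y) + FL (dirL d xs) y" for y
    by (simp add: FL_dirL dL_def sum4 algebra_simps)
  ultimately show ?case by simp
qed

lemma pd_affine:
  assumes "wf xs" and A: "\<And>w t. A (w(j := t)) = (\<lambda>m. A w m + (t - w j) * D m)"
  shows "pd (\<lambda>y. Re (FL xs (A y))) w j = Re (FL (dirL D xs) (A w))"
proof -
  let ?a = "\<lambda>m. A w m - w j * D m"
  have eq: "(\<lambda>t. Re (FL xs (A (w(j := t))))) = (\<lambda>t. Re (FL xs (\<lambda>i. ?a i + t * D i)))"
    by (rule ext) (simp add: A algebra_simps)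
  have "(\<lambda>i. ?a i + w j * D i) = A w" by auto
  then have "((\<lambda>t. Re (FL xs (\<lambda>i. ?a i + t * D i))) has_real_derivative Re (FL (dirL D xs) (A w))) (at (w j))"
    using FL_line_deriv[OF assms(1), of ?a D "w j"] by simp
  then show ?thesis unfolding pd_def eq by (rule DERIV_imp_deriv)
qed

lemma pd2_affine:
  assumes "wf xs" and Ai: "\<And>w t. A (w(i := t)) = (\<lambda>m. A w m + (t - w i) * Di m)"
    and Aj: "\<And>w t. A (w(j := t)) = (\<lambda>m. A w m + (t - w j) * Dj m)"
  shows "pd2 (\<lambda>y. Re (FL xs (A y))) w i j = Re (FL (dirL Di (dirL Dj xs)) (A w))"
proof -
  have "(\<lambda>y. pd (\<lambda>y. Re (FL xs (A y))) y j) = (\<lambda>y. Re (FL (dirL Dj xs) (A y)))"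
    by (rule ext) (rule pd_affine[OF assms(1) Aj])
  then show ?thesis unfolding pd2_def using pd_affine[OF wf_dirL[OF assms(1)] Ai] by simp
qed

lemma dL_concat: "dL n (concat L) = concat (map (dL n) L)"
  unfolding dL_def by (simp add: map_concat)

lemma sum_list_upt4: "(\<Sum>m\<leftarrow>[0..<4]. f m) = (\<Sum>m<(4::nat). f m)"
  by (simp add: sum_list_distinct_conv_sum_set atLeast0LessThan)

lemma FL_dL_dirL: "FL (dL n (dirL Dj xs)) x = (\<Sum>m<4. of_real (Dj m) * FL (dL n (dL m xs)) x)"
proof -
  have "dL n (dirL Dj xs) = concat (map (\<lambda>m. map (scT (of_real (Dj m))) (dL n (dL m xs))) [0..<4])"
    unfolding dirL_def dL_concat by (simp only: map_map comp_def dL_scT)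
  then show ?thesis by (simp only: FL_concat FL_scT sum_list_upt4)
qed

lemma FL_dirL2: "FL (dirL Di (dirL Dj xs)) x = (\<Sum>n<4. \<Sum>m<4. of_real (Di n * Dj m) * FL (dL n (dL m xs)) x)"
  unfolding FL_dirL FL_dL_dirL by (simp add: sum_distrib_left mult.assoc)


lemma indep2:
  fixes x y :: complex
  assumes "Im (cnj x * y) \<noteq> 0"
  shows "independent {x, y} \<and> x \<noteq> y"
proof -
  have y0: "y \<noteq> 0" using assms by auto
  have xy: "x \<noteq> y" using assms by (auto simp: complex_eq_iff)
  have "x \<notin> span {y}"
  proof
    assume "x \<in> span {y}"
    then obtain k where "x = k *\<^sub>R y" by (auto simp: span_singleton)
    then have "Im (cnj x * y) = 0" by (simp add: scaleR_conv_of_real)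
    with assms show False by simp
  qed
  moreover have "independent {y}" using y0 by (simp add: independent_insert)
  ultimately show ?thesis using xy by (simp add: independent_insert)
qed

lemma dim_ge2:
  fixes L :: "complex \<times> complex \<Rightarrow> complex"
  assumes "Im (cnj (L a) * L b) \<noteq> 0"
  shows "2 \<le> dim (range L)"
proof -
  from indep2[OF assms] have "independent {L a, L b}" "L a \<noteq> L b" by auto
  moreover have "{L a, L b} \<subseteq> range L" by auto
  ultimately have "card {L a, L b} \<le> dim (range L)" by (intro independent_card_le_dim) auto
  with \<open>L a \<noteq> L b\<close> show ?thesis by simp
qed

lemma key_im: "Im (cnj (m * (a + 1)) * (m * (\<i> * a - \<i>))) = (cmod m)^2 * ((cmod a)^2 - 1)"
  unfolding cmod_power2 by (simp add: algebra_simps power2_eq_square)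

lemma sing_mod:
  assumes "singular_point p q \<mu> (u0, v0)" "\<mu> \<noteq> 0"
  shows "real p * cmod u0 ^ (p - 1) = 1 \<and> real q * cmod v0 ^ (q - 1) = 1"
proof -
  define L where "L = (\<lambda>h::complex\<times>complex. \<mu> * (of_nat p * fst h * u0 ^ (p - 1) + cnj (fst h))
       + (of_nat q * snd h * v0 ^ (q - 1) + cnj (snd h)))"
  have "(Pmap p q \<mu> has_derivative L) (at (u0, v0))"
    unfolding Pmap_def[abs_def] L_def
    by (rule derivative_eq_intros refl | simp)+ (simp add: algebra_simps)
  then have fd: "frechet_derivative (Pmap p q \<mu>) (at (u0, v0)) = L"
    by (simp add: frechet_derivative_at[symmetric])
  have d: "dim (range L) < 2" using assms(1) unfolding singular_point_def fd .
  have "cmod (of_nat p * u0 ^ (p - 1)) = 1"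
  proof (rule ccontr)
    assume ne: "cmod (of_nat p * u0 ^ (p - 1)) \<noteq> 1"
    have "Im (cnj (L (1,0)) * L (\<i>,0)) = (cmod \<mu>)^2 * ((cmod (of_nat p * u0 ^ (p - 1)))^2 - 1)"
      unfolding L_def using key_im[of \<mu> "of_nat p * u0 ^ (p - 1)"] by (simp add: algebra_simps)
    also have "\<dots> \<noteq> 0" using ne assms(2) by (auto simp: power2_eq_1_iff) (smt (verit) norm_ge_zero)
    finally have "2 \<le> dim (range L)" by (rule dim_ge2)
    with d show False by simp
  qed
  moreover have "cmod (of_nat q * v0 ^ (q - 1)) = 1"
  proof (rule ccontr)
    assume ne: "cmod (of_nat q * v0 ^ (q - 1)) \<noteq> 1"
    have "Im (cnj (L (0,1)) * L (0,\<i>)) = (cmod 1)^2 * ((cmod (of_nat q * v0 ^ (q - 1)))^2 - 1)"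
      unfolding L_def using key_im[of 1 "of_nat q * v0 ^ (q - 1)"] by (simp add: algebra_simps)
    also have "\<dots> \<noteq> 0" using ne by (auto simp: power2_eq_1_iff) (smt (verit) norm_ge_zero)
    finally have "2 \<le> dim (range L)" by (rule dim_ge2)
    with d show False by simp
  qed
  ultimately show ?thesis by (simp add: norm_mult norm_power)
qed


lemma final_alg:
  fixes \<rho> \<sigma> M S C S3 C3 c2 e P Qn k0 k1 k2 k3 h l1 l2 :: real and B :: "(nat \<Rightarrow> real) \<Rightarrow> (nat \<Rightarrow> real) \<Rightarrow> real" and E :: "nat \<Rightarrow> nat \<Rightarrow> real"
  assumes pos: "\<rho> > 0" "\<sigma> > 0" "M > 0" "c2 \<noteq> 0" "C \<noteq> 0"
    and sc: "S^2 + C^2 = 1" "S3^2 + C3^2 = 1" "e^2 = 1"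
    and phi: "e*(P-1)*\<sigma>*S3 + (Qn-1)*M*\<rho>*S = 0"
    and k0_def: "k0 = 2*M*C*c2" and k1_def: "k1 = -2*\<rho>*M*S*c2" and k2_def: "k2 = 2*e*C3*c2"
    and k3_def: "k3 = -2*e*\<sigma>*S3*c2"
    and B_def: "B = (\<lambda>u v. (M*(P-1)/c2) * (S/\<rho> * u 0 * v 0 + C*(u 0 * v 1 + u 1 * v 0) - \<rho>*S*u 1 * v 1)
       + (e*(Qn-1)/c2) * (S3/\<sigma> * u 2 * v 2 + C3*(u 2 * v 3 + u 3 * v 2) - \<sigma>*S3*u 3 * v 3))"
    and h_def: "h = B (pt4 (- k1 / k0) 1 0 0) (pt4 (- k1 / k0) 1 0 0)"
    and l1_def: "l1 = B (pt4 (- k1 / k0) 1 0 0) (pt4 (- k2 / k0) 0 1 0) / h"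
    and l2_def: "l2 = B (pt4 (- k1 / k0) 1 0 0) (pt4 (- k3 / k0) 0 0 1) / h"
    and E_def: "E = (\<lambda>i::nat. if i = 1 then pt4 (- k1 / k0) 1 0 0
               else if i = 2 then pt4 ((l1 * k1 - k2) / k0) (- l1) 1 0
               else pt4 ((l2 * k1 - k3) / k0) (- l2) 0 1)"
  assumes hne: "h \<noteq> 0"
  shows "(\<forall>i\<in>{1,2,3}. \<forall>j\<in>{1,2,3}. B (E i) (E j) =
            (if i = j then (if i = 1 then h
                            else if i = 2 then - 4 * (P - 1)^2 * M^2 / (k0^2 * h)
                            else 0)
             else 0))
       \<and> h = 4 * (P - 1) * M^3 * \<rho> * S * c2 / k0^2"
proof -
  define A where "A = M*(P-1)/c2"
  define Ev where "Ev = e*(Qn-1)/c2"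
  define t2 where "t2 = e*C3/(M*C)"
  define t3 where "t3 = -e*\<sigma>*S3/(M*C)"
  have kk: "- k1 / k0 = \<rho>*S/C" "- k2 / k0 = -t2" "- k3 / k0 = -t3"
    using pos by (auto simp: k0_def k1_def k2_def k3_def t2_def t3_def field_simps)
  have Bv: "B (pt4 a b c d) (pt4 a' b' c' d') = A * (S/\<rho> * a * a' + C*(a * b' + b * a') - \<rho>*S*b * b')
       + Ev * (S3/\<sigma> * c * c' + C3*(c * d' + d * c') - \<sigma>*S3*d * d')" for a b c d a' b' c' d'
    by (simp add: B_def pt4_def A_def Ev_def)
  have hv0: "h = A*\<rho>*S*(S^2+C^2)/C^2"
    unfolding h_def kk Bv using pos by (simp add: field_simps power2_eq_square)
  have hv: "h = A*\<rho>*S/C^2" using hv0 sc by simp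
  have S0: "S \<noteq> 0" using hne hv by auto
  have A0: "A \<noteq> 0" using hne hv by auto
  have b12: "B (pt4 (- k1 / k0) 1 0 0) (pt4 (- k2 / k0) 0 1 0) = -t2*A*(S^2+C^2)/C"
    unfolding kk Bv using pos by (simp add: field_simps power2_eq_square)
  have b13: "B (pt4 (- k1 / k0) 1 0 0) (pt4 (- k3 / k0) 0 0 1) = -t3*A*(S^2+C^2)/C"
    unfolding kk Bv using pos by (simp add: field_simps power2_eq_square)
  have l1v: "l1 = -t2*C/(\<rho>*S)" unfolding l1_def b12 hv using sc pos S0 A0
    by (simp add: field_simps power2_eq_square)
  have l2v: "l2 = -t3*C/(\<rho>*S)" unfolding l2_def b13 hv using sc pos S0 A0
    by (simp add: field_simps power2_eq_square)
  have E1: "E 1 = pt4 (\<rho>*S/C) 1 0 0" unfolding E_def kk by simp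
  have E2: "E 2 = pt4 0 (t2*C/(\<rho>*S)) 1 0" unfolding E_def l1v
    using pos S0 by (simp add: k0_def k1_def k2_def t2_def field_simps)
  have E3: "E 3 = pt4 0 (t3*C/(\<rho>*S)) 0 1" unfolding E_def l2v
    using pos S0 by (simp add: k0_def k1_def k3_def t3_def field_simps)
  have e11: "B (E 1) (E 1) = h" unfolding E1 hv0 Bv using pos by (simp add: field_simps power2_eq_square)
  have e12: "B (E 1) (E 2) = 0" "B (E 2) (E 1) = 0" unfolding E1 E2 Bv using pos S0 by (simp_all add: field_simps)
  have e13: "B (E 1) (E 3) = 0" "B (E 3) (E 1) = 0" unfolding E1 E3 Bv using pos S0 by (simp_all add: field_simps)
  have key: "(P-1)*\<sigma>*S3 + e*(Qn-1)*M*\<rho>*S = 0"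
  proof -
    have "e * (e*(P-1)*\<sigma>*S3 + (Qn-1)*M*\<rho>*S) = 0" using phi by simp
    then show ?thesis using sc(3) by (simp add: algebra_simps power2_eq_square)
  qed
  have hform: "h = 4 * (P - 1) * M^3 * \<rho> * S * c2 / k0^2"
    unfolding hv A_def k0_def using pos by (simp add: field_simps power2_eq_square power3_eq_cube)
  have Evv: "Ev = -(P-1)*\<sigma>*S3/(M*\<rho>*S*c2)"
  proof -
    have eq: "e*(Qn-1)*(M*\<rho>*S) = -(P-1)*\<sigma>*S3" using key by (simp add: algebra_simps)
    have "e*(Qn-1) = -(P-1)*\<sigma>*S3/(M*\<rho>*S)" using pos S0 by (simp add: eq_divide_eq eq)
    then show ?thesis unfolding Ev_def using pos by (simp add: field_simps)
  qed
  have C3s: "C3^2 = 1 - S3^2" using sc by simp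
  have e22a: "B (E 2) (E 2) = -(P-1)*(e^2*C3^2 + S3^2)/(M*\<rho>*S*c2)"
    unfolding E2 Bv Evv A_def t2_def using pos S0 by (simp add: field_simps power2_eq_square)
  have P1: "P - 1 \<noteq> 0" using A0 by (simp add: A_def)
  have e22: "B (E 2) (E 2) = - 4 * (P - 1)^2 * M^2 / (k0^2 * h)"
  proof -
    have k0n: "k0 \<noteq> 0" using pos by (simp add: k0_def)
    have kh: "k0^2 * h = 4*(P-1)*M^3*\<rho>*S*c2" using hform k0n by (simp add: field_simps)
    have "e^2*C3^2 + S3^2 = 1" using sc by simp
    then have "B (E 2) (E 2) = -(P-1)/(M*\<rho>*S*c2)" unfolding e22a by simp
    also have "\<dots> = - 4 * (P - 1)^2 * M^2 / (k0^2 * h)" unfolding kh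
      using pos S0 P1 by (simp add: field_simps power2_eq_square power3_eq_cube)
    finally show ?thesis .
  qed
  have e23: "B (E 2) (E 3) = 0" "B (E 3) (E 2) = 0"
    unfolding E2 E3 Bv Evv A_def t2_def t3_def using pos S0 sc(3)
    by (simp_all add: field_simps power2_eq_square)
  have e33: "B (E 3) (E 3) = 0"
    unfolding E3 Bv Evv A_def t3_def using pos S0 sc(3)
    by (simp add: field_simps power2_eq_square)
  show ?thesis using e11 e12 e13 e22 e23 e33 hform by auto
qed


definition c1D :: "(nat \<Rightarrow> real) \<Rightarrow> nat \<Rightarrow> nat \<Rightarrow> real" where
  "c1D k j = pt4 (if j = 0 then 1 / k 0 else - k j / k 0) (if j = 1 then 1 else 0)
     (if j = 2 then 1 else 0) (if j = 3 then 1 else 0)"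

definition c12D :: "(nat \<Rightarrow> real) \<Rightarrow> real \<Rightarrow> real \<Rightarrow> nat \<Rightarrow> nat \<Rightarrow> real" where
  "c12D k l1 l2 j = (if j = 1 then pt4 (- k 1 / k 0) 1 0 0
               else if j = 2 then pt4 ((l1 * k 1 - k 2) / k 0) (- l1) 1 0
               else pt4 ((l2 * k 1 - k 3) / k 0) (- l2) 0 1)"

lemma c1_upd:
  assumes "k 0 \<noteq> 0" "j \<le> 3"
  shows "chg1_inv k (w(j := t)) = (\<lambda>m. chg1_inv k w m + (t - w j) * c1D k j m)"
proof -
  have "j = 0 \<or> j = 1 \<or> j = 2 \<or> j = 3" using assms(2) by auto
  then show ?thesis using assms(1)
    by (auto simp: chg1_inv_def c1D_def pt4_def fun_eq_iff field_simps)
qed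

lemma c12_upd:
  assumes "k 0 \<noteq> 0" "j \<in> {1,2,3}"
  shows "chg1_inv k (chg2_inv l1 l2 (w(j := t))) = (\<lambda>m. chg1_inv k (chg2_inv l1 l2 w) m + (t - w j) * c12D k l1 l2 j m)"
proof -
  have "j = 1 \<or> j = 2 \<or> j = 3" using assms(2) by auto
  then show ?thesis using assms(1)
    by (auto simp: chg1_inv_def chg2_inv_def c12D_def pt4_def fun_eq_iff divide_simps) (simp_all add: algebra_simps)
qed

lemma id_upd: "(w::nat\<Rightarrow>real)(j := t) = (\<lambda>m. w m + (t - w j) * (if m = j then 1 else 0))"
  by (rule ext) simp

lemma LK:
  assumes "cos t \<noteq> 0"
  shows "Re ((- \<i> - of_real (sin t / cos t)) * (Z * cis t)) = Im Z / cos t"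
proof -
  have "(- \<i> - of_real (sin t / cos t)) * cis t = - \<i> / of_real (cos t)"
    using assms by (simp add: complex_eq_iff cis.ctr field_simps power2_eq_square)
      (metis distrib_left mult.right_neutral sin_cos_squared_add3)
  then have "(- \<i> - of_real (sin t / cos t)) * (Z * cis t) = - \<i> * Z / of_real (cos t)"
    by (metis mult.left_commute times_divide_eq_right mult.commute)
  then show ?thesis by (simp add: Re_divide_of_real)
qed

lemma cis_kpi: "cis (of_int \<kappa> * pi) = complex_of_real ((-1) powi \<kappa>)"
  using cis_power_int[of pi \<kappa>] by simp



theorem lemma3p11:
  fixes p q :: nat and \<mu> u0 v0 :: complex and a1 a2 am :: real and \<kappa> :: int
    and x0 k y0 w0 :: "nat \<Rightarrow> real" and Q R Rhat Rhat1 Rhat2 :: "(nat \<Rightarrow> real) \<Rightarrow> real"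
    and s h l1 l2 \<Theta>1 \<Theta>2 \<Theta>3 \<phi> :: real
  assumes "p \<ge> 2" and "q \<ge> 2" and "\<mu> \<noteq> 0"
    and sing: "singular_point p q \<mu> (u0, v0)"
    and arg_u: "u0 = complex_of_real (cmod u0) * cis a1"
    and arg_v: "v0 = complex_of_real (cmod v0) * cis a2"
    and arg_mu: "\<mu> = complex_of_real (cmod \<mu>) * cis am"
    and kappa: "(real p - 1) / 2 * a1 + am = (real q - 1) / 2 * a2 + real_of_int \<kappa> * pi"
  defines "\<Theta>1 \<equiv> (real p + 1) / 2 * a1"
    and "\<Theta>2 \<equiv> (real p - 1) / 2 * a1 + am"
    and "\<Theta>3 \<equiv> (real q + 1) / 2 * a2"
    and "Q \<equiv> Qpol p q \<mu>" and "R \<equiv> Rpol p q \<mu>"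
    and "x0 \<equiv> pt4 (cmod u0) a1 (cmod v0) a2"
    and "k \<equiv> (\<lambda>i. pd Q x0 i)"
    and "\<phi> \<equiv> (-1) powi \<kappa> * (real p - 1) * cmod v0 * sin \<Theta>3
              + (real q - 1) * cmod \<mu> * cmod u0 * sin \<Theta>1"
    and "y0 \<equiv> chg1 k x0"
    and "s \<equiv> pd (R \<circ> chg1_inv k) y0 0"
    and "Rhat \<equiv> (\<lambda>x. R x - s * Q x)"
    and "Rhat1 \<equiv> Rhat \<circ> chg1_inv k"
    and "h \<equiv> pd2 Rhat1 y0 1 1"
    and "l1 \<equiv> pd2 Rhat1 y0 1 2 / h"
    and "l2 \<equiv> pd2 Rhat1 y0 1 3 / h"
    and "w0 \<equiv> chg2 l1 l2 y0"
    and "Rhat2 \<equiv> Rhat1 \<circ> chg2_inv l1 l2"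
  assumes k1: "k 0 \<noteq> 0" and phi0: "\<phi> = 0" and h0: "h \<noteq> 0"
  shows "(\<forall>i\<in>{1,2,3}. \<forall>j\<in>{1,2,3}. pd2 Rhat2 w0 i j =
            (if i = j then (if i = 1 then h
                            else if i = 2 then - 4 * (real p - 1)^2 * (cmod \<mu>)^2 / ((k 0)^2 * h)
                            else 0)
             else 0))
       \<and> h = 4 * (real p - 1) * (cmod \<mu>)^3 * cmod u0 * sin \<Theta>1 * cos \<Theta>2 / (k 0)^2"
proof -
  define \<rho> where "\<rho> = cmod u0"
  define \<sigma> where "\<sigma> = cmod v0"
  define M where "M = cmod \<mu>"
  define \<epsilon> :: real where "\<epsilon> = (-1) powi \<kappa>"
  have hpq: "real p * \<rho> ^ (p - 1) = 1" "real q * \<sigma> ^ (q - 1) = 1"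
    using sing_mod[OF sing \<open>\<mu> \<noteq> 0\<close>] by (auto simp: \<rho>_def \<sigma>_def)
  have \<rho>pos: "\<rho> > 0"
  proof -
    have "\<rho> \<noteq> 0" using hpq(1) \<open>p \<ge> 2\<close> by (auto simp: power_0_left)
    then show ?thesis by (simp add: \<rho>_def)
  qed
  have \<sigma>pos: "\<sigma> > 0"
  proof -
    have "\<sigma> \<noteq> 0" using hpq(2) \<open>q \<ge> 2\<close> by (auto simp: power_0_left)
    then show ?thesis by (simp add: \<sigma>_def)
  qed
  have Mpos: "M > 0" using \<open>\<mu> \<noteq> 0\<close> by (simp add: M_def)
  define P0 :: "tm list" where "P0 = [(\<mu>, p, real p, 0), (\<mu>, 1, -1, 0), (1, q, real q, 2), (1, 1, -1, 2)]"
  have wfP: "wf P0" by (simp add: wf_def P0_def)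
  have FLP: "Pmap p q \<mu> (polar x) = FL P0 x" for x
    by (simp add: Pmap_def polar_def P0_def evT_def power_mult_distrib Complex.DeMoivre cis_cnj algebra_simps)
  have Qe: "Q = (\<lambda>x. Re (FL P0 x))" by (simp add: Q_def Qpol_def FLP fun_eq_iff)
  have Re: "R = (\<lambda>x. Re (FL (map (scT (- \<i>)) P0) x))" by (simp add: R_def Rpol_def FLP fun_eq_iff)
  have x0e: "x0 = pt4 \<rho> a1 \<sigma> a2" by (simp add: x0_def \<rho>_def \<sigma>_def)
  have mue: "\<mu> = of_real M * cis am" using arg_mu by (simp add: M_def)
  have epsm: "cis (of_int (- \<kappa>) * pi) = of_real \<epsilon>"
    using cis_kpi[of "- \<kappa>"] by (simp add: \<epsilon>_def power_int_minus_one_minus)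
  have eps2: "\<epsilon>^2 = 1" by (simp add: \<epsilon>_def power2_eq_square)
  have cp: "cis (real p * a1) = cis \<Theta>1 * cis \<Theta>2 / cis am"
  proof -
    have "real p * a1 = \<Theta>1 + \<Theta>2 - am" by (simp add: \<Theta>1_def \<Theta>2_def field_simps)
    then show ?thesis by (simp add: cis_mult cis_divide)
  qed
  have cm: "cis (- a1) = cis (- \<Theta>1) * cis \<Theta>2 / cis am"
  proof -
    have "- a1 = - \<Theta>1 + \<Theta>2 - am" by (simp add: \<Theta>1_def \<Theta>2_def field_simps)
    then show ?thesis by (simp add: cis_mult cis_divide)
  qed
  have cq: "cis (real q * a2) = of_real \<epsilon> * cis \<Theta>3 * cis \<Theta>2"
  proof -
    have "real q * a2 = \<Theta>3 + \<Theta>2 + of_int (- \<kappa>) * pi" using kappa by (simp add: \<Theta>3_def \<Theta>2_def field_simps)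
    then have "cis (real q * a2) = cis \<Theta>3 * cis \<Theta>2 * cis (of_int (- \<kappa>) * pi)" by (simp only: cis_mult)
    then show ?thesis unfolding epsm by (simp add: mult_ac)
  qed
  have cmq: "cis (- a2) = of_real \<epsilon> * cis (- \<Theta>3) * cis \<Theta>2"
  proof -
    have "- a2 = - \<Theta>3 + \<Theta>2 + of_int (- \<kappa>) * pi" using kappa by (simp add: \<Theta>3_def \<Theta>2_def field_simps)
    then have "cis (- a2) = cis (- \<Theta>3) * cis \<Theta>2 * cis (of_int (- \<kappa>) * pi)" by (simp only: cis_mult)
    then show ?thesis unfolding epsm by (simp add: mult_ac)
  qed
  have p0: "(of_nat p :: complex) \<noteq> 0" "(of_nat q :: complex) \<noteq> 0" using \<open>p \<ge> 2\<close> \<open>q \<ge> 2\<close> by auto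
  have r0: "complex_of_real \<rho> \<noteq> 0" "complex_of_real \<sigma> \<noteq> 0" using \<rho>pos \<sigma>pos by auto
  have pw1: "complex_of_real \<rho> ^ (p - Suc 0) = 1 / of_nat p"
    using hpq(1) \<open>p \<ge> 2\<close> by (simp add: field_simps flip: of_real_power) (metis of_real_of_nat_eq of_real_mult of_real_1)
  have pw0: "complex_of_real \<rho> ^ p = of_real \<rho> / of_nat p"
  proof -
    have "p = Suc (p - Suc 0)" using \<open>p \<ge> 2\<close> by simp
    then have "complex_of_real \<rho> ^ p = of_real \<rho> * complex_of_real \<rho> ^ (p - Suc 0)" by (metis power_Suc)
    then show ?thesis by (simp add: pw1)
  qed
  have pw2: "complex_of_real \<rho> ^ (p - Suc (Suc 0)) = 1 / (of_nat p * of_real \<rho>)"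
  proof -
    have "p - Suc 0 = Suc (p - Suc (Suc 0))" using \<open>p \<ge> 2\<close> by simp
    then have "complex_of_real \<rho> ^ (p - Suc 0) = of_real \<rho> * complex_of_real \<rho> ^ (p - Suc (Suc 0))" by (metis power_Suc)
    then show ?thesis using pw1 r0 p0 by (simp add: field_simps)
  qed
  have qw1: "complex_of_real \<sigma> ^ (q - Suc 0) = 1 / of_nat q"
    using hpq(2) \<open>q \<ge> 2\<close> by (simp add: field_simps flip: of_real_power) (metis of_real_of_nat_eq of_real_mult of_real_1)
  have qw0: "complex_of_real \<sigma> ^ q = of_real \<sigma> / of_nat q"
  proof -
    have "q = Suc (q - Suc 0)" using \<open>q \<ge> 2\<close> by simp
    then have "complex_of_real \<sigma> ^ q = of_real \<sigma> * complex_of_real \<sigma> ^ (q - Suc 0)" by (metis power_Suc)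
    then show ?thesis by (simp add: qw1)
  qed
  have qw2: "complex_of_real \<sigma> ^ (q - Suc (Suc 0)) = 1 / (of_nat q * of_real \<sigma>)"
  proof -
    have "q - Suc 0 = Suc (q - Suc (Suc 0))" using \<open>q \<ge> 2\<close> by simp
    then have "complex_of_real \<sigma> ^ (q - Suc 0) = of_real \<sigma> * complex_of_real \<sigma> ^ (q - Suc (Suc 0))" by (metis power_Suc)
    then show ?thesis using qw1 r0 p0 by (simp add: field_simps)
  qed
  note ev = P0_def dL_def dT_def evT_def x0e pt4_def mue cp cm cq cmq pw0 pw1 pw2 qw0 qw1 qw2
  have pm1: "(of_nat (p - Suc 0) :: complex) = of_nat p - 1" "(of_nat (q - Suc 0) :: complex) = of_nat q - 1"
    using \<open>p \<ge> 2\<close> \<open>q \<ge> 2\<close> by (auto simp: of_nat_diff)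
  have G0: "FL (dL 0 P0) x0 = of_real M * (cis \<Theta>1 + cis (- \<Theta>1)) * cis \<Theta>2"
    using p0 r0 pm1 by (simp add: ev; simp add: field_simps)
  have G1: "FL (dL 1 P0) x0 = \<i> * of_real (M * \<rho>) * (cis \<Theta>1 - cis (- \<Theta>1)) * cis \<Theta>2"
    using p0 r0 pm1 by (simp add: ev; simp add: field_simps)
  have G2: "FL (dL 2 P0) x0 = of_real \<epsilon> * (cis \<Theta>3 + cis (- \<Theta>3)) * cis \<Theta>2"
    using p0 r0 pm1 by (simp add: ev; simp add: field_simps)
  have G3: "FL (dL 3 P0) x0 = \<i> * of_real (\<epsilon> * \<sigma>) * (cis \<Theta>3 - cis (- \<Theta>3)) * cis \<Theta>2"
    using p0 r0 pm1 by (simp add: ev; simp add: field_simps)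
  have H00: "FL (dL 0 (dL 0 P0)) x0 = (of_real (M * (real p - 1) / \<rho>) * cis \<Theta>1) * cis \<Theta>2"
    using p0 r0 pm1 by (simp add: ev; simp add: field_simps)
  have H01: "FL (dL 0 (dL 1 P0)) x0 = (\<i> * of_real M * (of_nat p * cis \<Theta>1 - cis (- \<Theta>1))) * cis \<Theta>2"
    using p0 r0 pm1 by (simp add: ev; simp add: field_simps)
  have H02: "FL (dL 0 (dL 2 P0)) x0 = 0"
    using p0 r0 pm1 by (simp add: ev; simp add: field_simps)
  have H03: "FL (dL 0 (dL 3 P0)) x0 = 0"
    using p0 r0 pm1 by (simp add: ev; simp add: field_simps)
  have H10: "FL (dL 1 (dL 0 P0)) x0 = (\<i> * of_real M * (of_nat p * cis \<Theta>1 - cis (- \<Theta>1))) * cis \<Theta>2"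
    using p0 r0 pm1 by (simp add: ev; simp add: field_simps)
  have H11: "FL (dL 1 (dL 1 P0)) x0 = (- of_real (M * \<rho>) * (of_nat p * cis \<Theta>1 + cis (- \<Theta>1))) * cis \<Theta>2"
    using p0 r0 pm1 by (simp add: ev; simp add: field_simps)
  have H12: "FL (dL 1 (dL 2 P0)) x0 = 0"
    using p0 r0 pm1 by (simp add: ev; simp add: field_simps)
  have H13: "FL (dL 1 (dL 3 P0)) x0 = 0"
    using p0 r0 pm1 by (simp add: ev; simp add: field_simps)
  have H20: "FL (dL 2 (dL 0 P0)) x0 = 0"
    using p0 r0 pm1 by (simp add: ev; simp add: field_simps)
  have H21: "FL (dL 2 (dL 1 P0)) x0 = 0"
    using p0 r0 pm1 by (simp add: ev; simp add: field_simps)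
  have H22: "FL (dL 2 (dL 2 P0)) x0 = (of_real (\<epsilon> * (real q - 1) / \<sigma>) * cis \<Theta>3) * cis \<Theta>2"
    using p0 r0 pm1 by (simp add: ev; simp add: field_simps)
  have H23: "FL (dL 2 (dL 3 P0)) x0 = (\<i> * of_real \<epsilon> * (of_nat q * cis \<Theta>3 - cis (- \<Theta>3))) * cis \<Theta>2"
    using p0 r0 pm1 by (simp add: ev; simp add: field_simps)
  have H30: "FL (dL 3 (dL 0 P0)) x0 = 0"
    using p0 r0 pm1 by (simp add: ev; simp add: field_simps)
  have H31: "FL (dL 3 (dL 1 P0)) x0 = 0"
    using p0 r0 pm1 by (simp add: ev; simp add: field_simps)
  have H32: "FL (dL 3 (dL 2 P0)) x0 = (\<i> * of_real \<epsilon> * (of_nat q * cis \<Theta>3 - cis (- \<Theta>3))) * cis \<Theta>2"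
    using p0 r0 pm1 by (simp add: ev; simp add: field_simps)
  have H33: "FL (dL 3 (dL 3 P0)) x0 = (- of_real (\<epsilon> * \<sigma>) * (of_nat q * cis \<Theta>3 + cis (- \<Theta>3))) * cis \<Theta>2"
    using p0 r0 pm1 by (simp add: ev; simp add: field_simps)
  have wfS: "wf (map (scT c) P0)" for c by (simp add: wf_def P0_def scT_def)
  have kv: "k i = Re (FL (dL i P0) x0)" if "i \<le> 3" for i
  proof -
    have "k i = pd (\<lambda>y. Re (FL P0 ((\<lambda>y. y) y))) x0 i" by (simp add: k_def Qe)
    also have "\<dots> = Re (FL (dirL (\<lambda>m. if m = i then 1 else 0) P0) ((\<lambda>y. y) x0))"
      by (rule pd_affine[OF wfP]) (rule id_upd)
    also have "\<dots> = Re (FL (dL i P0) x0)"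
    proof -
      have "i = 0 \<or> i = 1 \<or> i = 2 \<or> i = 3" using that by auto
      then show ?thesis by (elim disjE) (simp_all add: FL_dirL sum4)
    qed
    finally show ?thesis .
  qed
  have k0v: "k 0 = 2*M*cos \<Theta>1*cos \<Theta>2" using kv[of 0] unfolding G0 by (simp add: cis.ctr algebra_simps)
  have k1v: "k 1 = - 2 * \<rho> * M * sin \<Theta>1 * cos \<Theta>2" using kv[of 1] unfolding G1 by (simp add: cis.ctr algebra_simps)
  have k2v: "k 2 = 2*\<epsilon>*cos \<Theta>3*cos \<Theta>2" using kv[of 2] unfolding G2 by (simp add: cis.ctr algebra_simps)
  have k3v: "k 3 = - 2 * \<epsilon> * \<sigma> * sin \<Theta>3 * cos \<Theta>2" using kv[of 3] unfolding G3 by (simp add: cis.ctr algebra_simps)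
  have c2: "cos \<Theta>2 \<noteq> 0" and C0: "cos \<Theta>1 \<noteq> 0" using k1 k0v by auto
  have ce: "chg1_inv k y0 = x0" using k1 by (simp add: chg1_inv_def chg1_def y0_def x0e pt4_def fun_eq_iff)
  have "s = pd (\<lambda>y. Re (FL (map (scT (- \<i>)) P0) (chg1_inv k y))) y0 0" by (simp add: s_def Re comp_def)
  also have "\<dots> = Re (FL (dirL (c1D k 0) (map (scT (- \<i>)) P0)) (chg1_inv k y0))"
    by (rule pd_affine[OF wfS]) (rule c1_upd[of k, OF k1], simp)
  also have "\<dots> = Im (FL (dL 0 P0) x0) / k 0" by (simp add: FL_dirL sum4 c1D_def pt4_def dL_scT ce)
  also have "\<dots> = sin \<Theta>2 / cos \<Theta>2" unfolding G0 k0v using Mpos C0 by (simp add: cis.ctr field_simps)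
  finally have sv: "s = sin \<Theta>2 / cos \<Theta>2" .
  define \<kappa>c where "\<kappa>c = - \<i> - complex_of_real s"
  define xsK where "xsK = map (scT \<kappa>c) P0"
  have wfK: "wf xsK" by (simp add: xsK_def wfS)
  have Rhe: "Rhat = (\<lambda>x. Re (FL xsK x))"
    by (simp add: Rhat_def Re Qe xsK_def \<kappa>c_def fun_eq_iff algebra_simps)
  have Rh1: "Rhat1 = (\<lambda>y. Re (FL xsK (chg1_inv k y)))" by (simp add: Rhat1_def Rhe comp_def)
  have Rh2: "Rhat2 = (\<lambda>w. Re (FL xsK (chg1_inv k (chg2_inv l1 l2 w))))" by (simp add: Rhat2_def Rh1 comp_def)
  define Hr where "Hr n m = Re (\<kappa>c * FL (dL n (dL m P0)) x0)" for n m
  have FLK: "FL (dL n (dL m xsK)) x = \<kappa>c * FL (dL n (dL m P0)) x" for n m x by (simp add: xsK_def dL_scT)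
  have sumH: "Re (FL (dirL Di (dirL Dj xsK)) x0) = (\<Sum>n<4. \<Sum>m<4. Di n * Dj m * Hr n m)" for Di Dj
    by (simp add: FL_dirL2 FLK Hr_def Re_sum mult.assoc)
  have kce: "\<kappa>c = - \<i> - complex_of_real (sin \<Theta>2 / cos \<Theta>2)" by (simp add: \<kappa>c_def sv)
  have Hr00: "Hr 0 0 = M * (real p - 1) * sin \<Theta>1 / (\<rho> * cos \<Theta>2)"
    unfolding Hr_def H00 kce LK[OF c2] by (simp add: cis.ctr algebra_simps)
  have Hr01: "Hr 0 1 = M * (real p - 1) * cos \<Theta>1 / cos \<Theta>2"
    unfolding Hr_def H01 kce LK[OF c2] by (simp add: cis.ctr algebra_simps)
  have Hr02: "Hr 0 2 = 0" unfolding Hr_def H02 by simp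
  have Hr03: "Hr 0 3 = 0" unfolding Hr_def H03 by simp
  have Hr10: "Hr 1 0 = M * (real p - 1) * cos \<Theta>1 / cos \<Theta>2"
    unfolding Hr_def H10 kce LK[OF c2] by (simp add: cis.ctr algebra_simps)
  have Hr11: "Hr 1 1 = - M * \<rho> * (real p - 1) * sin \<Theta>1 / cos \<Theta>2"
    unfolding Hr_def H11 kce LK[OF c2] by (simp add: cis.ctr algebra_simps)
  have Hr12: "Hr 1 2 = 0" unfolding Hr_def H12 by simp
  have Hr13: "Hr 1 3 = 0" unfolding Hr_def H13 by simp
  have Hr20: "Hr 2 0 = 0" unfolding Hr_def H20 by simp
  have Hr21: "Hr 2 1 = 0" unfolding Hr_def H21 by simp
  have Hr22: "Hr 2 2 = \<epsilon> * (real q - 1) * sin \<Theta>3 / (\<sigma> * cos \<Theta>2)"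
    unfolding Hr_def H22 kce LK[OF c2] by (simp add: cis.ctr algebra_simps)
  have Hr23: "Hr 2 3 = \<epsilon> * (real q - 1) * cos \<Theta>3 / cos \<Theta>2"
    unfolding Hr_def H23 kce LK[OF c2] by (simp add: cis.ctr algebra_simps)
  have Hr30: "Hr 3 0 = 0" unfolding Hr_def H30 by simp
  have Hr31: "Hr 3 1 = 0" unfolding Hr_def H31 by simp
  have Hr32: "Hr 3 2 = \<epsilon> * (real q - 1) * cos \<Theta>3 / cos \<Theta>2"
    unfolding Hr_def H32 kce LK[OF c2] by (simp add: cis.ctr algebra_simps)
  have Hr33: "Hr 3 3 = - \<epsilon> * \<sigma> * (real q - 1) * sin \<Theta>3 / cos \<Theta>2"
    unfolding Hr_def H33 kce LK[OF c2] by (simp add: cis.ctr algebra_simps)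
  define Bf :: "(nat \<Rightarrow> real) \<Rightarrow> (nat \<Rightarrow> real) \<Rightarrow> real" where "Bf = (\<lambda>u v. (M*(real p-1)/cos \<Theta>2) * (sin \<Theta>1/\<rho> * u 0 * v 0 + cos \<Theta>1*(u 0 * v 1 + u 1 * v 0) - \<rho>* sin \<Theta>1*u 1 * v 1)
       + (\<epsilon>*(real q-1)/cos \<Theta>2) * (sin \<Theta>3/\<sigma> * u 2 * v 2 + cos \<Theta>3*(u 2 * v 3 + u 3 * v 2) - \<sigma>* sin \<Theta>3*u 3 * v 3))"
  have sumB: "(\<Sum>n<4. \<Sum>m<4. Di n * Dj m * Hr n m) = Bf Di Dj" for Di Dj
    using \<rho>pos \<sigma>pos c2 by (simp add: sum4 Bf_def Hr00 Hr01 Hr02 Hr03 Hr10 Hr11 Hr12 Hr13 Hr20 Hr21 Hr22 Hr23 Hr30 Hr31 Hr32 Hr33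
        Hr00[unfolded One_nat_def] Hr01[unfolded One_nat_def] Hr02[unfolded One_nat_def] Hr03[unfolded One_nat_def]
        Hr10[unfolded One_nat_def] Hr11[unfolded One_nat_def] Hr12[unfolded One_nat_def] Hr13[unfolded One_nat_def]
        Hr20[unfolded One_nat_def] Hr21[unfolded One_nat_def] Hr22[unfolded One_nat_def] Hr23[unfolded One_nat_def]
        Hr30[unfolded One_nat_def] Hr31[unfolded One_nat_def] Hr32[unfolded One_nat_def] Hr33[unfolded One_nat_def]
        field_simps)
  have pd2R1: "pd2 Rhat1 y0 i j = Bf (c1D k i) (c1D k j)" if "i \<le> 3" "j \<le> 3" for i j
  proof -
    have "pd2 Rhat1 y0 i j = Re (FL (dirL (c1D k i) (dirL (c1D k j) xsK)) (chg1_inv k y0))"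
      unfolding Rh1 by (rule pd2_affine[OF wfK]) (use c1_upd[of k, OF k1] that in blast)+
    then show ?thesis by (simp add: ce sumH sumB)
  qed
  have c2e: "chg2_inv l1 l2 w0 = y0"
    by (simp add: w0_def chg2_def chg2_inv_def y0_def chg1_def pt4_def fun_eq_iff)
  have pd2R2: "pd2 Rhat2 w0 i j = Bf (c12D k l1 l2 i) (c12D k l1 l2 j)" if "i \<in> {1,2,3}" "j \<in> {1,2,3}" for i j
  proof -
    have "pd2 Rhat2 w0 i j = Re (FL (dirL (c12D k l1 l2 i) (dirL (c12D k l1 l2 j) xsK)) (chg1_inv k (chg2_inv l1 l2 w0)))"
      unfolding Rh2 by (rule pd2_affine[OF wfK]) (use c12_upd[of k, OF k1] that in blast)+
    then show ?thesis by (simp add: c2e ce sumH sumB)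
  qed
  have hB: "h = Bf (pt4 (- k 1 / k 0) 1 0 0) (pt4 (- k 1 / k 0) 1 0 0)"
    unfolding h_def using pd2R1[of 1 1] by (simp add: c1D_def)
  have l1B: "l1 = Bf (pt4 (- k 1 / k 0) 1 0 0) (pt4 (- k 2 / k 0) 0 1 0) / h"
    unfolding l1_def using pd2R1[of 1 2] by (simp add: c1D_def)
  have l2B: "l2 = Bf (pt4 (- k 1 / k 0) 1 0 0) (pt4 (- k 3 / k 0) 0 0 1) / h"
    unfolding l2_def using pd2R1[of 1 3] by (simp add: c1D_def)
  have Ee: "c12D k l1 l2 = (\<lambda>i::nat. if i = 1 then pt4 (- k 1 / k 0) 1 0 0
               else if i = 2 then pt4 ((l1 * k 1 - k 2) / k 0) (- l1) 1 0
               else pt4 ((l2 * k 1 - k 3) / k 0) (- l2) 0 1)"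
    by (simp add: c12D_def fun_eq_iff)
  have phi': "\<epsilon>*(real p-1)*\<sigma>* sin \<Theta>3 + (real q-1)*M*\<rho>* sin \<Theta>1 = 0"
    using phi0 by (simp add: \<phi>_def \<epsilon>_def \<sigma>_def M_def \<rho>_def)
  note FA = final_alg[of \<rho> \<sigma> M "cos \<Theta>2" "cos \<Theta>1" "sin \<Theta>1" "sin \<Theta>3" "cos \<Theta>3" \<epsilon> "real p" "real q"
      "k 0" "k 1" "k 2" "k 3" Bf h l1 l2 "c12D k l1 l2", OF \<rho>pos \<sigma>pos Mpos c2 C0 sin_cos_squared_add sin_cos_squared_add eps2 phi' k0v k1v k2v k3v Bf_def hB l1B l2B Ee h0]
  show ?thesis
  proof (intro conjI ballI)
    fix i j :: nat assume ij: "i \<in> {1,2,3}" "j \<in> {1,2,3}"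
    show "pd2 Rhat2 w0 i j = (if i = j then (if i = 1 then h
                            else if i = 2 then - 4 * (real p - 1)^2 * (cmod \<mu>)^2 / ((k 0)^2 * h)
                            else 0)
             else 0)"
      using FA ij unfolding pd2R2[OF ij] M_def by blast
  next
    show "h = 4 * (real p - 1) * (cmod \<mu>)^3 * cmod u0 * sin \<Theta>1 * cos \<Theta>2 / (k 0)^2"
      using FA unfolding M_def \<rho>_def by blast
  qed
qed


end
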